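(* Let $J\subseteq\mathbb{R}$ be an interval, $f:J\to\mathbb{R}$ convex, and $a,b\in J$. Then $$\int_0^1 f\big(a\nabla_\nu b\big)\,d\nu\le \frac{f(a)+f(b)}{2}-\int_0^1\big(1-|2\nu-1|\big)\left(\int_0^1\left(\frac{f\big(a\nabla_{\nu\lambda}b\big)+f\big(b\nabla_{(1-\nu)\lambda}a\big)}{2}-f\Big(a\nabla_{\frac{1+\lambda(2\nu-1)}{2}}b\Big)\right)d\lambda\right)d\nu .$$
   Context: For real $x,y$ and $\mu\in[0,1]$, $x\nabla_\mu y:=(1-\mu)x+\mu y$. *)

theory Defs
  imports "HOL-Analysis.Analysis"
begin

definition wam :: "real \<Rightarrow> real \<Rightarrow> real \<Rightarrow> real" where
  "wam x \<mu> y = (1 - \<mu>) * x + \<mu> * y"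

end

theory Submission
  imports Defs
begin

lemma cvx:
  fixes g :: "real \<Rightarrow> real"
  assumes "convex_on {0..1} g" "0 \<le> t" "t \<le> 1" "x \<in> {0..1}" "y \<in> {0..1}"
  shows "g ((1 - t) * x + t * y) \<le> (1 - t) * g x + t * g y"
  using convex_onD[OF assms(1) assms(2,3,4,5)] by simp

lemma slope_mono:
  fixes g :: "real \<Rightarrow> real"
  assumes c: "convex_on {0..1} g" and "0 \<le> p" "p < q" "p \<le> r" "r < s" "q \<le> s" "s \<le> 1"
  shows "(g q - g p) / (q - p) \<le> (g s - g r) / (s - r)"
proof -
  have 1: "(g q - g p) / (q - p) \<le> (g s - g p) / (s - p)"
  proof (cases "q = s")
    case False
    then have "(g p - g q) / (p - q) \<le> (g p - g s) / (p - s)"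
      using convex_on_slope_le(1)[OF c, of p s q] assms by auto
    then show ?thesis by (metis minus_diff_eq minus_divide_divide)
  qed simp
  have 2: "(g s - g p) / (s - p) \<le> (g s - g r) / (s - r)"
  proof (cases "p = r")
    case False
    then have "(g p - g s) / (p - s) \<le> (g r - g s) / (r - s)"
      using convex_on_slope_le(2)[OF c, of p s r] assms by auto
    then show ?thesis by (metis minus_diff_eq minus_divide_divide)
  qed simp
  from 1 2 show ?thesis by linarith
qed

lemma ext_left:
  fixes g :: "real \<Rightarrow> real"
  assumes c: "convex_on {0..1} g" and "0 \<le> p" "p \<le> x" "x \<le> y" "y \<le> 1"
  shows "(g x + g y)/2 - g ((x+y)/2) \<le> (g p + g y)/2 - g ((p+y)/2)"
proof (cases "p = x")
  case False
  then have "(g x - g p) / (x - p) \<le> (g ((x+y)/2) - g ((p+y)/2)) / ((x+y)/2 - (p+y)/2)"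
    using assms by (intro slope_mono[OF c]) auto
  moreover have d: "(x+y)/2 - (p+y)/2 = (x - p)/2" by (simp add: field_simps)
  ultimately have "(g x - g p) / (x - p) \<le> (g ((x+y)/2) - g ((p+y)/2)) / ((x - p)/2)"
    by (simp only: d)
  then have "(g x - g p) / (x - p) \<le> 2 * (g ((x+y)/2) - g ((p+y)/2)) / (x - p)"
    by (simp add: mult.commute)
  then have "g x - g p \<le> 2 * (g ((x+y)/2) - g ((p+y)/2))"
    using False assms by (simp add: divide_le_cancel)
  then show ?thesis by (simp add: field_simps)
qed simp

lemma ext_right:
  fixes g :: "real \<Rightarrow> real"
  assumes c: "convex_on {0..1} g" and "0 \<le> x" "x \<le> y" "y \<le> q" "q \<le> 1"
  shows "(g x + g y)/2 - g ((x+y)/2) \<le> (g x + g q)/2 - g ((x+q)/2)"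
proof (cases "y = q")
  case False
  then have "(g ((x+q)/2) - g ((x+y)/2)) / ((x+q)/2 - (x+y)/2) \<le> (g q - g y) / (q - y)"
    using assms by (intro slope_mono[OF c]) auto
  moreover have d: "(x+q)/2 - (x+y)/2 = (q - y)/2" by (simp add: field_simps)
  ultimately have "(g ((x+q)/2) - g ((x+y)/2)) / ((q - y)/2) \<le> (g q - g y) / (q - y)"
    by (simp only: d)
  then have "2 * (g ((x+q)/2) - g ((x+y)/2)) / (q - y) \<le> (g q - g y) / (q - y)"
    by (simp add: mult.commute)
  then have "2 * (g ((x+q)/2) - g ((x+y)/2)) \<le> g q - g y"
    using False assms by (simp add: divide_le_cancel)
  then show ?thesis by (simp add: field_simps)
qed simp

lemma defect_mono:
  fixes g :: "real \<Rightarrow> real"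
  assumes c: "convex_on {0..1} g" and "0 \<le> x" "x \<le> y" "y \<le> 1"
  shows "(g x + g y)/2 - g ((x+y)/2) \<le> (g 0 + g 1)/2 - g (1/2)"
  using ext_left[OF c, of 0 x y] ext_right[OF c, of 0 y 1] assms by simp

lemma main:
  fixes g :: "real \<Rightarrow> real"
  assumes c: "convex_on {0..1} g"
  shows "integral {0..1} g \<le> (g 0 + g 1)/2 - integral {0..1} (\<lambda>\<nu>. (1 - \<bar>2*\<nu> - 1\<bar>) *
     integral {0..1} (\<lambda>t. (g (\<nu>*t) + g (1 - (1-\<nu>)*t))/2 - g ((1 + t*(2*\<nu>-1))/2)))"
proof -
  define D where "D = (g 0 + g 1)/2 - g (1/2)"
  define w where "w = (\<lambda>\<nu>::real. 1 - \<bar>2*\<nu> - 1\<bar>)"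
  define I where "I = (\<lambda>\<nu>. integral {0..1} (\<lambda>t. (g (\<nu>*t) + g (1 - (1-\<nu>)*t))/2 - g ((1 + t*(2*\<nu>-1))/2)))"
  have g0: "g (1/2) \<le> (g 0 + g 1)/2" using cvx[OF c, of "1/2" 0 1] by simp
  then have D0: "D \<ge> 0" by (simp add: D_def)
  have pt: "g \<nu> \<le> (1-\<nu>)*g 0 + \<nu>*g 1 - w \<nu> * D" if "\<nu> \<in> {0..1}" for \<nu>
  proof (cases "\<nu> \<le> 1/2")
    case True
    have "g ((1 - 2*\<nu>)*0 + (2*\<nu>)*(1/2)) \<le> (1 - 2*\<nu>)*g 0 + (2*\<nu>)*g (1/2)"
      using cvx[OF c, of "2*\<nu>" 0 "1/2"] that True by auto
    moreover have "w \<nu> = 2*\<nu>" using True by (simp add: w_def abs_if)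
    then have "(1-\<nu>)*g 0 + \<nu>*g 1 - w \<nu> * D = (1 - 2*\<nu>)*g 0 + (2*\<nu>)*g (1/2)"
      by (simp add: D_def field_simps)
    ultimately show ?thesis by simp
  next
    case False
    have h: "g ((1 - (2*\<nu>-1))*(1/2) + (2*\<nu>-1)*1) \<le> (1 - (2*\<nu>-1))*g (1/2) + (2*\<nu>-1)*g 1"
      using cvx[OF c, of "2*\<nu>-1" "1/2" 1] that False by auto
    have arg: "(1 - (2*\<nu>-1))*(1/2) + (2*\<nu>-1)*1 = \<nu>" by (simp add: algebra_simps)
    from h have "g \<nu> \<le> (1 - (2*\<nu>-1))*g (1/2) + (2*\<nu>-1)*g 1" unfolding arg .
    moreover have "w \<nu> = 2 - 2*\<nu>" using False by (simp add: w_def abs_if)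
    moreover have "(1-\<nu>)*g 0 + \<nu>*g 1 - (2 - 2*\<nu>) * D = (1 - (2*\<nu>-1))*g (1/2) + (2*\<nu>-1)*g 1"
      by (simp add: D_def field_simps)
    ultimately show ?thesis by simp
  qed
  have bnd: "\<bar>g x\<bar> \<le> \<bar>g 0\<bar> + \<bar>g 1\<bar> + 2*\<bar>g (1/2)\<bar>" if x: "x \<in> {0..1}" for x
  proof -
    have 1: "g x \<le> (1-x)*g 0 + x*g 1" using cvx[OF c, of x 0 1] x by auto
    have 2: "g (1/2) \<le> (1/2)*g x + (1/2)* g (1-x)"
    proof -
      have e: "(1 - 1/2) * x + 1/2 * (1-x) = (1/2::real)" by (simp add: field_simps)
      have "g ((1 - 1/2) * x + 1/2 * (1-x)) \<le> (1 - 1/2) * g x + 1/2 * g (1-x)"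
        by (rule cvx[OF c]) (use x in auto)
      then show ?thesis unfolding e by simp
    qed
    have 3: "g (1-x) \<le> x*g 0 + (1-x)*g 1" using cvx[OF c, of "1-x" 0 1] x by auto
    have a: "(1-x)*g 0 \<le> (1-x)*\<bar>g 0\<bar>" "x*g 1 \<le> x*\<bar>g 1\<bar>" "x*g 0 \<le> x*\<bar>g 0\<bar>" "(1-x)*g 1 \<le> (1-x)*\<bar>g 1\<bar>"
      using x by (auto intro!: mult_left_mono)
    have b: "(1-x)*\<bar>g 0\<bar> \<le> \<bar>g 0\<bar>" "x*\<bar>g 1\<bar> \<le> \<bar>g 1\<bar>" "x*\<bar>g 0\<bar> \<le> \<bar>g 0\<bar>" "(1-x)*\<bar>g 1\<bar> \<le> \<bar>g 1\<bar>"
      using x by (auto simp: mult_le_cancel_right1 mult_left_le_one_le)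
    have up: "g x \<le> \<bar>g 0\<bar> + \<bar>g 1\<bar>" using 1 a(1,2) b(1,2) by linarith
    have lo: "g (1-x) \<le> \<bar>g 0\<bar> + \<bar>g 1\<bar>" using 3 a(3,4) b(3,4) by linarith
    have lo2: "2 * g (1/2) \<le> g x + g (1-x)" using 2 by simp
    have "- \<bar>g (1/2)\<bar> \<le> g (1/2)" by simp
    then show ?thesis using up lo lo2 unfolding abs_le_iff by linarith
  qed
  have cont: "continuous_on {0<..<1} g"
    by (rule convex_on_continuous) (auto intro: convex_on_subset[OF c])
  have meas: "g \<in> borel_measurable (lebesgue_on {0<..<1::real})"
    by (rule continuous_imp_measurable_on_sets_lebesgue[OF cont]) simp
  have cint: "(\<lambda>_. \<bar>g 0\<bar> + \<bar>g 1\<bar> + 2*\<bar>g (1/2)\<bar>) integrable_on {0<..<1::real}"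
    using integrable_on_Icc_iff_Ioo by blast
  have intg: "g integrable_on {0..1}"
    unfolding integrable_on_Icc_iff_Ioo
    by (rule measurable_bounded_by_integrable_imp_integrable[OF meas cint]) (use bnd in auto)
  have id1: "((\<lambda>x. x) has_integral 1/2) {0..1::real}"
    using ident_has_integral[of 0 "1::real"] by simp
  have c1: "((\<lambda>x. 1::real) has_integral 1) {0..1::real}"
    using has_integral_const_real[of "1::real" 0 1] by simp
  have wa: "(w has_integral 1/4) {0..1/2}"
  proof -
    have "((\<lambda>x. x * 2) has_integral 1/4) {0..1/2::real}"
      using has_integral_mult_left[OF ident_has_integral[of 0 "1/2::real"], where c=2] by (simp add: power2_eq_square)
    then show ?thesis
      by (rule has_integral_eq[rotated]) (auto simp: w_def abs_if power2_eq_square)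
  qed
  have wb: "(w has_integral 1/4) {1/2..1}"
  proof -
    have "((\<lambda>x. 2 - x * 2) has_integral 1/4) {1/2..1::real}"
      using has_integral_diff[OF has_integral_const_real[of "2::real" "1/2" 1]
          has_integral_mult_left[OF ident_has_integral[of "1/2" "1::real"], where c=2]] by (simp add: power2_eq_square)
    then show ?thesis
      by (rule has_integral_eq[rotated]) (auto simp: w_def abs_if power2_eq_square)
  qed
  have wint: "(w has_integral 1/2) {0..1}"
    using has_integral_combine[OF _ _ wa wb] by simp
  have Pint: "((\<lambda>\<nu>. (1-\<nu>)*g 0 + \<nu>*g 1 - w \<nu> * D) has_integral ((g 0 + g 1)/2 - D/2)) {0..1}"
  proof -
    have A: "((\<lambda>\<nu>. (1 * g 0 - \<nu> * g 0) + \<nu>*g 1 - w \<nu> * D) has_integral ((1 * g 0 - 1/2 * g 0) + 1/2 * g 1 - 1/2 * D)) {0..1}"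
      by (intro has_integral_diff has_integral_add has_integral_mult_left c1 id1 wint)
    have B: "(1 * g 0 - 1/2 * g 0 + 1/2 * g 1 - 1/2 * D) = (g 0 + g 1)/2 - D/2"
      by (simp add: field_simps)
    from A have "((\<lambda>\<nu>. (1 * g 0 - \<nu> * g 0) + \<nu>*g 1 - w \<nu> * D) has_integral ((g 0 + g 1)/2 - D/2)) {0..1}"
      unfolding B .
    then show ?thesis
      by (rule has_integral_eq[rotated]) (auto simp: algebra_simps)
  qed
  have step1: "integral {0..1} g \<le> (g 0 + g 1)/2 - D/2"
    by (rule has_integral_le[OF integrable_integral[OF intg] Pint]) (use pt in auto)
  have ID: "I \<nu> \<le> D" if \<nu>: "\<nu> \<in> {0..1}" for \<nu>
  proof (cases "(\<lambda>t. (g (\<nu>*t) + g (1 - (1-\<nu>)*t))/2 - g ((1 + t*(2*\<nu>-1))/2)) integrable_on {0..1}")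
    case True
    have cD: "((\<lambda>t. D) has_integral D) {0..1::real}"
      using has_integral_const_real[of D 0 "1::real"] by simp
    show ?thesis unfolding I_def
    proof (rule has_integral_le[OF integrable_integral[OF True] cD])
      fix t :: real assume t: "t \<in> {0..1}"
      have e: "(\<nu>*t + (1 - (1-\<nu>)*t))/2 = (1 + t*(2*\<nu>-1))/2" by (simp add: algebra_simps)
      have "\<nu>*t \<le> 1 - (1-\<nu>)*t" using t by (simp add: algebra_simps)
      moreover have "0 \<le> \<nu>*t" "1 - (1-\<nu>)*t \<le> 1" using t \<nu> by auto
      ultimately have "(g (\<nu>*t) + g (1 - (1-\<nu>)*t))/2 - g ((\<nu>*t + (1 - (1-\<nu>)*t))/2) \<le> D"
        unfolding D_def by (intro defect_mono[OF c]) auto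
      then show "(g (\<nu>*t) + g (1 - (1-\<nu>)*t))/2 - g ((1 + t*(2*\<nu>-1))/2) \<le> D"
        unfolding e .
    qed
  next
    case False
    then show ?thesis using D0 by (simp add: I_def not_integrable_integral)
  qed
  have step2: "integral {0..1} (\<lambda>\<nu>. w \<nu> * I \<nu>) \<le> D/2"
  proof (cases "(\<lambda>\<nu>. w \<nu> * I \<nu>) integrable_on {0..1}")
    case True
    have "((\<lambda>\<nu>. w \<nu> * D) has_integral (1/2 * D)) {0..1}"
      by (rule has_integral_mult_left[OF wint])
    then have "integral {0..1} (\<lambda>\<nu>. w \<nu> * I \<nu>) \<le> 1/2 * D"
    proof (rule has_integral_le[OF integrable_integral[OF True]])
      fix \<nu> :: real assume \<nu>: "\<nu> \<in> {0..1}"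
      have "w \<nu> \<ge> 0" using \<nu> by (auto simp: w_def abs_if)
      then show "w \<nu> * I \<nu> \<le> w \<nu> * D" using ID[OF \<nu>] by (rule mult_left_mono[rotated])
    qed
    then show ?thesis by simp
  next
    case False
    then show ?thesis using D0 by (simp add: not_integrable_integral)
  qed
  have eq: "(\<lambda>\<nu>. (1 - \<bar>2*\<nu> - 1\<bar>) *
     integral {0..1} (\<lambda>t. (g (\<nu>*t) + g (1 - (1-\<nu>)*t))/2 - g ((1 + t*(2*\<nu>-1))/2))) = (\<lambda>\<nu>. w \<nu> * I \<nu>)"
    by (simp add: w_def I_def)
  show ?thesis unfolding eq using step1 step2 by linarith
qed

theorem corollary2p15:
  fixes J :: "real set" and f :: "real \<Rightarrow> real" and a b :: real
  assumes "is_interval J"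
    and "convex_on J f"
    and "a \<in> J" and "b \<in> J"
  shows "integral {0..1} (\<lambda>\<nu>. f (wam a \<nu> b))
    \<le> (f a + f b) / 2
       - integral {0..1} (\<lambda>\<nu>. (1 - \<bar>2 * \<nu> - 1\<bar>) *
           integral {0..1} (\<lambda>t.
             (f (wam a (\<nu> * t) b) + f (wam b ((1 - \<nu>) * t) a)) / 2
             - f (wam a ((1 + t * (2 * \<nu> - 1)) / 2) b)))"
proof -
  define g where "g = (\<lambda>\<nu>. f (wam a \<nu> b))"
  have cJ: "convex J" using assms(1) by (rule is_interval_convex)
  have inJ: "wam a x b \<in> J" if "x \<in> {0..1}" for x
    using convexD[OF cJ assms(3,4), of "1-x" x] that by (simp add: wam_def)
  have c: "convex_on {0..1} g"
  proof (rule convex_onI)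
    fix t x y :: real assume t: "0 < t" "t < 1" and x: "x \<in> {0..1}" and y: "y \<in> {0..1}"
    have e: "wam a ((1 - t) *\<^sub>R x + t *\<^sub>R y) b = (1 - t) * wam a x b + t * wam a y b"
      by (simp add: wam_def algebra_simps)
    show "g ((1 - t) *\<^sub>R x + t *\<^sub>R y) \<le> (1 - t) * g x + t * g y"
      unfolding g_def e using convex_onD[OF assms(2), of t "wam a x b" "wam a y b"] t inJ[OF x] inJ[OF y]
      by simp
  qed simp
  have sw: "wam b s a = wam a (1 - s) b" for s by (simp add: wam_def algebra_simps)
  have g0: "g 0 = f a" "g 1 = f b" by (simp_all add: g_def wam_def)
  show ?thesis
    using main[OF c] unfolding g0 by (simp add: g_def sw)
qed

end
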